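(* Let $m\geq 1$ and $n>2m$ be integers with $\gcd\{m,n\}=1$, and let $$P(z)=z^{n}-\frac{2n}{n-m}z^{n-m}+\frac{n}{n-2m}z^{n-2m}+c,$$ where $c\in\mathbb{C}$ satisfies $|c|\neq 0$ and $|c|\neq\frac{2m^2}{(n-m)(n-2m)}$. Then $P$ is a critically injective polynomial having only simple zeros.
   Context: A polynomial $P$ whose derivative $P'$ has distinct zeros $d_1,\dots,d_t$ is called critically injective if $P(d_i)\neq P(d_j)$ for all $i\neq j$. *)

theory Defs
  imports Complex_Main "HOL-Computational_Algebra.Polynomial"
begin

definition critically_injective :: "complex poly \<Rightarrow> bool" where
  "critically_injective P \<longleftrightarrow>
     (\<forall>a b. poly (pderiv P) a = 0 \<and> poly (pderiv P) b = 0 \<and> a \<noteq> b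
            \<longrightarrow> poly P a \<noteq> poly P b)"

end

theory Submission
  imports Defs
begin

lemma root_inj:
  fixes a b :: complex and m n :: nat
  assumes "m \<ge> 1" "coprime m n" "a^m = 1" "b^m = 1" "a^n = b^n"
  shows "a = b"
proof -
  have b0: "b \<noteq> 0" using assms(1,4) by (metis power_0_left zero_neq_one not_one_le_zero)
  define z where "z = a / b"
  have zm: "z^m = 1" using assms b0 by (simp add: z_def power_divide)
  have zn: "z^n = 1" using assms b0 by (simp add: z_def power_divide)
  obtain x y where xy: "m * x = n * y + gcd m n" using bezout_nat[of m n] assms(1) by auto
  have "gcd m n = 1" using assms(2) by simp
  then have "m * x = n * y + 1" using xy by simp
  then have "z^(m*x) = z^(n*y) * z" by (simp add: power_add)
  then have "z = 1" using zm zn by (simp add: power_mult)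
  then show ?thesis using b0 by (simp add: z_def)
qed

theorem lemma3p1:
  fixes m n :: nat and c :: complex
  assumes "m \<ge> 1" and "n > 2 * m" and "coprime m n"
    and "cmod c \<noteq> 0"
    and "cmod c \<noteq> 2 * (real m)^2 / (real (n - m) * real (n - 2 * m))"
  defines "P \<equiv> monom 1 n
      - smult (2 * of_nat n / of_nat (n - m)) (monom 1 (n - m))
      + smult (of_nat n / of_nat (n - 2 * m)) (monom 1 (n - 2 * m))
      + [:c:]"
  shows "critically_injective P \<and> rsquarefree P"
proof -
  obtain i where n: "n = Suc (2*m + i)" using assms(2) by (metis less_iff_Suc_add)
  have e1: "n - m = Suc (m + i)" "n - 2*m = Suc i" "n - 1 = 2*m+i" "n - Suc 0 = 2*m+i" "n - m - Suc 0 = m + i" "n - 2*m - Suc 0 = i" "n - m - 1 = m + i" "n - 2*m - 1 = i"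
    using n by auto
  define K :: real where "K = 2 * (real m)^2 / (real (n - m) * real (n - 2 * m))"
  have Kpos: "K > 0" using assms(1) e1 by (simp add: K_def)
  have dP: "poly (pderiv P) z = of_nat n * z^i * (z^m - 1)^2" for z
  proof -
    have "poly (pderiv P) z = of_nat n * z^(2*m+i) - (2 * of_nat n / of_nat (Suc (m+i))) * of_nat (Suc (m+i)) * z^(m+i)
       + (of_nat n / of_nat (Suc i)) * of_nat (Suc i) * z^i"
      unfolding P_def by (simp add: pderiv_monom pderiv_add pderiv_diff pderiv_smult poly_monom e1 pderiv_pCons)
    also have "\<dots> = of_nat n * z^(2*m+i) - 2 * of_nat n * z^(m+i) + of_nat n * z^i"
      by (simp del: of_nat_Suc)
    also have "\<dots> = of_nat n * z^i * (z^m - 1)^2"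
    proof -
      have a: "z^(2*m+i) = z^i*(z^m*z^m)" by (simp only: mult_2 power_add) (simp add: mult_ac)
      have b: "z^(m+i) = z^i*z^m" by (simp add: power_add mult.commute)
      show ?thesis unfolding a b power2_eq_square by algebra
    qed
    finally show ?thesis .
  qed
  have Pz: "poly P z = z^n - (2 * of_nat n / of_nat (n-m)) * z^(n-m) + (of_nat n / of_nat (n-2*m)) * z^(n-2*m) + c" for z
    unfolding P_def by (simp add: poly_monom)
  have P0: "poly P 0 = c" using Pz[of 0] e1 n by simp
  have coef: "1 - 2 * real n / real (n-m) + real n / real (n-2*m) = K"
  proof -
    have A: "real (n-m) = real m + real (Suc i)" and B: "real (n-2*m) = real (Suc i)"
      and N: "real n = 2 * real m + real (Suc i)" using e1 n by auto
    have "real (Suc i) > 0" by simp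
    then show ?thesis unfolding K_def A B N
      by (simp add: field_simps power2_eq_square)
  qed
  have Pw: "poly P w = of_real K * w^n + c" if w: "w^m = 1" for w
  proof -
    have nn: "n = (n-m) + m" "n = (n-2*m) + m + m" using e1 n by simp_all
    have "w^n = w^(n-m) * w^m" by (metis nn(1) power_add)
    then have h1: "w^(n-m) = w^n" using w by simp
    have "w^n = w^(n-2*m) * w^m * w^m" by (metis nn(2) power_add)
    then have h2: "w^(n-2*m) = w^n" using w by simp
    have "poly P w = w^n * of_real (1 - 2 * real n / real (n-m) + real n / real (n-2*m)) + c"
      unfolding Pz h1 h2 by (simp add: algebra_simps)
    then show ?thesis unfolding coef by simp
  qed
  have crit: "poly (pderiv P) z = 0 \<Longrightarrow> (z = 0 \<and> i > 0) \<or> z^m = 1" for z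
  proof -
    have nz: "(of_nat n::complex) \<noteq> 0" using n by (simp only: of_nat_eq_0_iff)
    assume "poly (pderiv P) z = 0"
    then have "z^i = 0 \<or> (z^m - 1)^2 = 0" unfolding dP using nz by simp
    then show ?thesis by auto
  qed
  have CI: "critically_injective P"
    unfolding critically_injective_def
  proof (intro allI impI)
    fix a b assume h: "poly (pderiv P) a = 0 \<and> poly (pderiv P) b = 0 \<and> a \<noteq> b"
    have nz: "of_real K * w^n \<noteq> 0" if "w^m = 1" for w :: complex
    proof -
      have "w \<noteq> 0" using that assms(1) by (cases "w = 0") (auto simp: power_0_left)
      then show ?thesis using Kpos by simp
    qed
    show "poly P a \<noteq> poly P b"
    proof (cases "a^m = 1 \<and> b^m = 1")
      case True
      show ?thesis
      proof
        assume "poly P a = poly P b"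
        then have "a^n = b^n" using True Pw Kpos by simp
        then show False using root_inj[OF assms(1,3)] True h by blast
      qed
    next
      case False
      have ca: "a = 0 \<or> a^m = 1" using crit[of a] h by auto
      have cb: "b = 0 \<or> b^m = 1" using crit[of b] h by auto
      have "(a = 0 \<and> b^m = 1) \<or> (b = 0 \<and> a^m = 1)" using ca cb False h by auto
      then show ?thesis
      proof
        assume hh: "a = 0 \<and> b^m = 1"
        have "poly P a = c" using hh P0 by simp
        moreover have "poly P b = of_real K * b^n + c" using hh Pw[of b] by simp
        moreover have "of_real K * b^n \<noteq> 0" using hh nz[of b] by simp
        ultimately show ?thesis by simp
      next
        assume hh: "b = 0 \<and> a^m = 1"
        have "poly P b = c" using hh P0 by simp
        moreover have "poly P a = of_real K * a^n + c" using hh Pw[of a] by simp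
        moreover have "of_real K * a^n \<noteq> 0" using hh nz[of a] by simp
        ultimately show ?thesis by simp
      qed
    qed
  qed
  have RS: "rsquarefree P"
    unfolding rsquarefree_roots
  proof (intro allI notI)
    fix a assume h: "poly P a = 0 \<and> poly (pderiv P) a = 0"
    then have "a = 0 \<or> a^m = 1" using crit[of a] by auto
    then consider "a = 0" | "a^m = 1" by blast
    then show False
    proof cases
      case 1 then show False using h P0 assms(4) by simp
    next
      case 2
      then have "norm (a ^ m) = 1" by simp
      then have "norm a ^ m = 1 ^ m" by (simp add: norm_power)
      moreover have "(0::real) < m" using assms(1) by simp
      ultimately have "norm a = 1" using power_eq_imp_eq_base[of "norm a" m 1] by simp
      then have "norm (of_real K * a^n) = K" using Kpos by (simp add: norm_mult norm_power)
      moreover have "c = - (of_real K * a^n)" using h Pw[OF 2] by (simp add: add_eq_0_iff)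
      ultimately have "cmod c = K" by simp
      then show False using assms(5) K_def by simp
    qed
  qed
  show ?thesis using CI RS by blast
qed

end
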